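(* Let $\delta\in(0,1)$, $k\ge1$, and let $G=S_k$ be the star with one hub and $k$ leaves, with vertex set $V$ and $\mathcal H=\{\{i,j\}:\{i,j\}\in E(S_k)\}$. Then $$\mu_{\mathrm{leaf}}(V;r^{v^G}_{\mathcal H})=\delta+\frac{2(k-1)}{3}\delta^2\quad\text{for every leaf},\qquad \mu_{\mathrm{hub}}(V;r^{v^G}_{\mathcal H})=k\delta+\frac{k(k-1)}{3}\delta^2.$$
   Context: For a finite simple undirected graph $G=(V,E)$ and $\delta\in(0,1)$: for $S\subseteq V$, $G[S]$ is the induced subgraph and $t_{ij}(G[S])$ the shortest-path distance in $G[S]$ ($=\infty$ if disconnected), with $\delta^\infty:=0$. The distance-polynomial worth is $v^G(S):=\sum_{i\in S}\sum_{j\in S,\,j\neq i}\delta^{t_{ij}(G[S])}$. For a conference structure $\mathcal H$ (family of subsets of $V$ of size $\ge2$) and $C\subseteq V$, $C/\mathcal H$ is the partition of $C$ into classes connected via chains of pairwise-intersecting members of $\mathcal H$ contained in $C$, and $r^{v^G}_{\mathcal H}(C):=\sum_{B\in C/\mathcal H}v^G(B)$. For a TU game $u$ on finite player set $N$, $\mu_i(N;u):=\sum_{S\subseteq N\setminus\{i\}}\frac{|S|!(|N|-|S|-1)!}{|N|!}(u(S\cup\{i\})-u(S))$. *)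

theory Defs
  imports Complex_Main "HOL-Library.Extended_Nat"
begin

text \<open>Simple graphs given by an edge relation E (symmetric, irreflexive) on vertex type 'a.\<close>

definition walk_in :: "('a \<Rightarrow> 'a \<Rightarrow> bool) \<Rightarrow> 'a set \<Rightarrow> 'a \<Rightarrow> 'a \<Rightarrow> nat \<Rightarrow> bool" where
  "walk_in E S i j n \<longleftrightarrow> (\<exists>xs. length xs = Suc n \<and> hd xs = i \<and> last xs = j \<and> set xs \<subseteq> S
      \<and> (\<forall>m<n. E (xs ! m) (xs ! Suc m)))"

definition sp_dist :: "('a \<Rightarrow> 'a \<Rightarrow> bool) \<Rightarrow> 'a set \<Rightarrow> 'a \<Rightarrow> 'a \<Rightarrow> enat" where
  "sp_dist E S i j = (if \<exists>n. walk_in E S i j n then enat (LEAST n. walk_in E S i j n) else \<infinity>)"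

definition dpow :: "real \<Rightarrow> enat \<Rightarrow> real" where
  "dpow d t = (case t of enat n \<Rightarrow> d ^ n | \<infinity> \<Rightarrow> 0)"

definition worth :: "real \<Rightarrow> ('a \<Rightarrow> 'a \<Rightarrow> bool) \<Rightarrow> 'a set \<Rightarrow> real" where
  "worth d E S = (\<Sum>i\<in>S. \<Sum>j\<in>S - {i}. dpow d (sp_dist E S i j))"

definition conf_conn :: "'a set set \<Rightarrow> 'a set \<Rightarrow> 'a \<Rightarrow> 'a \<Rightarrow> bool" where
  "conf_conn H C x y \<longleftrightarrow> (x = y \<and> x \<in> C) \<or>
     (\<exists>hs. hs \<noteq> [] \<and> set hs \<subseteq> {h \<in> H. h \<subseteq> C} \<and> x \<in> hd hs \<and> y \<in> last hs
        \<and> (\<forall>m. Suc m < length hs \<longrightarrow> hs ! m \<inter> hs ! Suc m \<noteq> {}))"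

definition conf_partition :: "'a set set \<Rightarrow> 'a set \<Rightarrow> 'a set set" where
  "conf_partition H C = C // {(x, y). conf_conn H C x y}"

definition conf_restr :: "('a set \<Rightarrow> real) \<Rightarrow> 'a set set \<Rightarrow> 'a set \<Rightarrow> real" where
  "conf_restr u H C = (\<Sum>B\<in>conf_partition H C. u B)"

definition shapley :: "'a \<Rightarrow> 'a set \<Rightarrow> ('a set \<Rightarrow> real) \<Rightarrow> real" where
  "shapley i N u = (\<Sum>S\<in>Pow (N - {i}).
      (fact (card S) * fact (card N - card S - 1) / fact (card N)) * (u (insert i S) - u S))"

text \<open>Star S_k: hub 0, leaves 1..k.\<close>
definition star_edge :: "nat \<Rightarrow> nat \<Rightarrow> nat \<Rightarrow> bool" where
  "star_edge k x y \<longleftrightarrow> (x = 0 \<and> y \<in> {1..k}) \<or> (y = 0 \<and> x \<in> {1..k})"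

end

theory Submission
  imports Defs
begin

lemma walk0: "walk_in E S i j 0 \<longleftrightarrow> i = j \<and> i \<in> S"
  unfolding walk_in_def
proof
  assume "\<exists>xs. length xs = Suc 0 \<and> hd xs = i \<and> last xs = j \<and> set xs \<subseteq> S \<and> (\<forall>m<0. E (xs ! m) (xs ! Suc m))"
  then obtain xs where "length xs = Suc 0" "hd xs = i" "last xs = j" "set xs \<subseteq> S" by blast
  then show "i = j \<and> i \<in> S" by (cases xs) auto
next
  assume "i = j \<and> i \<in> S"
  then show "\<exists>xs. length xs = Suc 0 \<and> hd xs = i \<and> last xs = j \<and> set xs \<subseteq> S \<and> (\<forall>m<0. E (xs ! m) (xs ! Suc m))"
    by (intro exI[of _ "[i]"]) auto
qed

lemma walk1: "walk_in E S i j 1 \<longleftrightarrow> i \<in> S \<and> j \<in> S \<and> E i j"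
  unfolding walk_in_def
proof
  assume "\<exists>xs. length xs = Suc 1 \<and> hd xs = i \<and> last xs = j \<and> set xs \<subseteq> S \<and> (\<forall>m<1. E (xs ! m) (xs ! Suc m))"
  then obtain xs where "length xs = Suc 1" "hd xs = i" "last xs = j" "set xs \<subseteq> S" "\<forall>m<1. E (xs ! m) (xs ! Suc m)" by blast
  then show "i \<in> S \<and> j \<in> S \<and> E i j"
    by (cases xs; cases "tl xs") auto
next
  assume "i \<in> S \<and> j \<in> S \<and> E i j"
  then show "\<exists>xs. length xs = Suc 1 \<and> hd xs = i \<and> last xs = j \<and> set xs \<subseteq> S \<and> (\<forall>m<1. E (xs ! m) (xs ! Suc m))"
    by (intro exI[of _ "[i,j]"]) auto
qed

lemma walk1S: "walk_in E S i j (Suc 0) \<longleftrightarrow> i \<in> S \<and> j \<in> S \<and> E i j"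
  using walk1 by simp

lemma walk2: "i \<in> S \<Longrightarrow> j \<in> S \<Longrightarrow> x \<in> S \<Longrightarrow> E i x \<Longrightarrow> E x j \<Longrightarrow> walk_in E S i j 2"
  unfolding walk_in_def
  apply (intro exI[of _ "[i,x,j]"])
  apply (auto simp: less_Suc_eq numeral_2_eq_2)
  done

lemma sp_eq: "walk_in E S i j n \<Longrightarrow> (\<And>m. m < n \<Longrightarrow> \<not> walk_in E S i j m) \<Longrightarrow> sp_dist E S i j = enat n"
  unfolding sp_dist_def
  by (auto intro!: Least_equality) (meson not_le)

lemma sp_hub_leaf:
  assumes "C \<subseteq> {0..k}" "0 \<in> C" "j \<in> C" "j \<noteq> 0"
  shows "sp_dist (star_edge k) C 0 j = enat 1" "sp_dist (star_edge k) C j 0 = enat 1"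
  using assms
  by (auto intro!: sp_eq simp: walk1 walk1S walk0 star_edge_def subset_iff)

lemma sp_leaf_leaf:
  assumes "C \<subseteq> {0..k}" "0 \<in> C" "i \<in> C" "j \<in> C" "j \<noteq> 0" "i \<noteq> 0" "i \<noteq> j"
  shows "sp_dist (star_edge k) C i j = enat 2"
proof (rule sp_eq)
  have "i \<in> {1..k}" "j \<in> {1..k}" using assms by auto
  then have "star_edge k i 0" "star_edge k 0 j" by (auto simp: star_edge_def)
  then show "walk_in (star_edge k) C i j 2"
    using assms(2,3,4) by (intro walk2[of _ _ _ 0])
  fix m :: nat assume "m < 2"
  then have "m = 0 \<or> m = Suc 0" by auto
  moreover have "\<not> star_edge k i j" using assms(5,6) by (simp add: star_edge_def)
  ultimately show "\<not> walk_in (star_edge k) C i j m"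
    using assms(7) by (auto simp only: walk1S walk0)
qed

definition ff :: "real \<Rightarrow> nat \<Rightarrow> real" where
  "ff d m = 2 * real m * d + real m * (real m - 1) * d ^ 2"

lemma worth_C:
  assumes "C \<subseteq> {0..k}" "0 \<in> C"
  shows "worth d (star_edge k) C = ff d (card C - 1)"
proof -
  let ?L = "C - {0}"
  have fin: "finite C" using finite_subset[OF assms(1)] by simp
  have C: "C = insert 0 ?L" using assms by auto
  have cL: "card ?L = card C - 1" using fin assms by simp
  have h0: "(\<Sum>j\<in>C - {0}. dpow d (sp_dist (star_edge k) C 0 j)) = real (card ?L) * d"
  proof -
    have "(\<Sum>j\<in>C - {0}. dpow d (sp_dist (star_edge k) C 0 j)) = (\<Sum>j\<in>C - {0}. d)"
    proof (rule sum.cong[OF refl])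
      fix j assume "j \<in> C - {0}"
      then have "sp_dist (star_edge k) C 0 j = enat 1" using sp_hub_leaf(1)[OF assms] by blast
      then show "dpow d (sp_dist (star_edge k) C 0 j) = d" by (simp add: dpow_def)
    qed
    then show ?thesis by simp
  qed
  have hl: "(\<Sum>j\<in>C - {i}. dpow d (sp_dist (star_edge k) C i j)) = d + (real (card ?L) - 1) * d^2"
    if i: "i \<in> ?L" for i
  proof -
    have "C - {i} = insert 0 (?L - {i})" using i assms by auto
    then have "(\<Sum>j\<in>C - {i}. dpow d (sp_dist (star_edge k) C i j))
       = dpow d (sp_dist (star_edge k) C i 0) + (\<Sum>j\<in>?L - {i}. dpow d (sp_dist (star_edge k) C i j))"
      using fin by simp
    also have "(\<Sum>j\<in>?L - {i}. dpow d (sp_dist (star_edge k) C i j)) = (\<Sum>j\<in>?L - {i}. d^2)"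
    proof (rule sum.cong[OF refl])
      fix j assume "j \<in> ?L - {i}"
      then have "sp_dist (star_edge k) C i j = enat 2" using sp_leaf_leaf[OF assms] i by blast
      then show "dpow d (sp_dist (star_edge k) C i j) = d^2" by (simp add: dpow_def)
    qed
    also have "dpow d (sp_dist (star_edge k) C i 0) = d"
    proof -
      have "sp_dist (star_edge k) C i 0 = enat 1" using sp_hub_leaf(2)[OF assms] i by blast
      then show ?thesis by (simp add: dpow_def)
    qed
    also have "(\<Sum>j\<in>?L - {i}. d^2) = real (card ?L - 1) * d^2" using i fin by simp
    also have "real (card ?L - 1) = real (card ?L) - 1" proof -
      have "card ?L > 0" using i fin by (auto simp: card_gt_0_iff)
      then show ?thesis by (simp add: of_nat_diff)
    qed
    finally show ?thesis by simp
  qed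
  have "worth d (star_edge k) C = (\<Sum>j\<in>C - {0}. dpow d (sp_dist (star_edge k) C 0 j))
        + (\<Sum>i\<in>?L. \<Sum>j\<in>C - {i}. dpow d (sp_dist (star_edge k) C i j))"
    unfolding worth_def by (rule sum.remove[OF fin assms(2)])
  also have "(\<Sum>i\<in>?L. \<Sum>j\<in>C - {i}. dpow d (sp_dist (star_edge k) C i j)) = (\<Sum>i\<in>?L. d + (real (card ?L) - 1) * d^2)"
    by (rule sum.cong[OF refl]) (rule hl)
  also have "\<dots> = real (card ?L) * (d + (real (card ?L) - 1) * d^2)" by simp
  finally have "worth d (star_edge k) C = real (card ?L) * d + real (card ?L) * (d + (real (card ?L) - 1) * d^2)"
    using h0 by simp
  then show ?thesis unfolding ff_def cL[symmetric] by (simp add: algebra_simps power2_eq_square)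
qed


lemma H_mem: "h \<in> {{i, j} | i j. star_edge k i j} \<Longrightarrow> 0 \<in> h"
  by (auto simp: star_edge_def)

lemma conn_no0:
  assumes "0 \<notin> C"
  shows "conf_conn {{i, j} | i j. star_edge k i j} C x y \<longleftrightarrow> x = y \<and> x \<in> C"
proof -
  have "\<not> (hs \<noteq> [] \<and> set hs \<subseteq> {h \<in> {{i, j} | i j. star_edge k i j}. h \<subseteq> C})" for hs
  proof
    assume a: "hs \<noteq> [] \<and> set hs \<subseteq> {h \<in> {{i, j} | i j. star_edge k i j}. h \<subseteq> C}"
    then have "hd hs \<in> {h \<in> {{i, j} | i j. star_edge k i j}. h \<subseteq> C}" using hd_in_set[of hs] by (meson subsetD)
    then show False using H_mem assms by blast
  qed
  then show ?thesis unfolding conf_conn_def by blast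
qed

lemma conn_0:
  assumes "C \<subseteq> {0..k}" "0 \<in> C" "x \<in> C" "y \<in> C"
  shows "conf_conn {{i, j} | i j. star_edge k i j} C x y"
proof -
  let ?H = "{{i, j} | i j. star_edge k i j}"
  have e: "{0, z} \<in> ?H" if "z \<in> C" "z \<noteq> 0" for z
  proof -
    have "star_edge k 0 z" using that assms(1) by (auto simp: star_edge_def subset_iff)
    then show ?thesis by blast
  qed
  show ?thesis
  proof (cases "x = y")
    case True then show ?thesis using assms by (simp add: conf_conn_def)
  next
    case False
    show ?thesis
    proof (cases "x = 0")
      case True
      then have "y \<noteq> 0" using False by auto
      then show ?thesis unfolding conf_conn_def using True e[of y] assms
        by (intro disjI2 exI[of _ "[{0,y}]"]) auto
    next
      case x: False
      show ?thesis
      proof (cases "y = 0")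
        case True
        then show ?thesis unfolding conf_conn_def using x e[of x] assms
          by (intro disjI2 exI[of _ "[{0,x}]"]) auto
      next
        case y: False
        show ?thesis unfolding conf_conn_def using x y e[of x] e[of y] assms
          by (intro disjI2 exI[of _ "[{0,x},{0,y}]"]) (auto simp: less_Suc_eq)
      qed
    qed
  qed
qed

lemma conn_in: "conf_conn H C x y \<Longrightarrow> y \<in> C"
  unfolding conf_conn_def
proof (elim disjE exE conjE)
  fix hs assume "hs \<noteq> []" "set hs \<subseteq> {h \<in> H. h \<subseteq> C}" "y \<in> last hs"
  then show "y \<in> C" using last_in_set by blast
qed simp

lemma restr_no0:
  assumes "0 \<notin> C"
  shows "conf_restr (worth d (star_edge k)) {{i, j} | i j. star_edge k i j} C = 0"
  unfolding conf_restr_def conf_partition_def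
proof (rule sum.neutral, rule ballI)
  fix B assume "B \<in> C // {(x, y). conf_conn {{i, j} | i j. star_edge k i j} C x y}"
  then obtain x where "x \<in> C" "B = {(x, y). conf_conn {{i, j} | i j. star_edge k i j} C x y} `` {x}"
    unfolding quotient_def by blast
  then have "B = {x}" using conn_no0[OF assms] by auto
  then show "worth d (star_edge k) B = 0" by (simp add: worth_def)
qed

lemma restr_0:
  assumes "C \<subseteq> {0..k}" "0 \<in> C"
  shows "conf_restr (worth d (star_edge k)) {{i, j} | i j. star_edge k i j} C = ff d (card C - 1)"
proof -
  have "C // {(x, y). conf_conn {{i, j} | i j. star_edge k i j} C x y} = {C}"
  proof -
    have "{(x, y). conf_conn {{i, j} | i j. star_edge k i j} C x y} `` {x} = C" if "x \<in> C" for x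
    proof
      show "{(x, y). conf_conn {{i, j} | i j. star_edge k i j} C x y} `` {x} \<subseteq> C"
        using conn_in by fastforce
      show "C \<subseteq> {(x, y). conf_conn {{i, j} | i j. star_edge k i j} C x y} `` {x}"
        using conn_0[OF assms that] by blast
    qed
    then show ?thesis unfolding quotient_def using assms(2) by blast
  qed
  then show ?thesis unfolding conf_restr_def conf_partition_def using worth_C[OF assms] by simp
qed


lemma sum_Pow_card:
  fixes h :: "nat \<Rightarrow> real"
  assumes "finite A"
  shows "(\<Sum>S\<in>Pow A. h (card S)) = (\<Sum>s=0..card A. real (card A choose s) * h s)"
proof -
  have "(\<Sum>S\<in>Pow A. h (card S)) = (\<Sum>s\<in>{0..card A}. \<Sum>S\<in>{S\<in>Pow A. card S = s}. h (card S))"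
    by (rule sum.group[symmetric]) (use assms in \<open>auto simp: card_mono\<close>)
  also have "\<dots> = (\<Sum>s=0..card A. real (card A choose s) * h s)"
  proof (rule sum.cong[OF refl])
    fix s
    have "(\<Sum>S\<in>{S\<in>Pow A. card S = s}. h (card S)) = (\<Sum>S\<in>{S\<in>Pow A. card S = s}. h s)"
      by (rule sum.cong) auto
    also have "\<dots> = real (card {S\<in>Pow A. card S = s}) * h s" by simp
    also have "{S\<in>Pow A. card S = s} = {B. B \<subseteq> A \<and> card B = s}" by auto
    finally show "(\<Sum>S\<in>{S\<in>Pow A. card S = s}. h (card S)) = real (card A choose s) * h s"
      using n_subsets[OF assms] by simp
  qed
  finally show ?thesis .
qed

lemma sum_lin: "(\<Sum>s=0..k. real s) = real k * (real k + 1) / 2"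
  by (induction k) (simp_all add: field_simps)

lemma sum_quad: "(\<Sum>s=0..k. real s * (real s - 1)) = (real k + 1) * real k * (real k - 1) / 3"
  by (induction k) (simp_all add: field_simps)

lemma sum_lin1: "(\<Sum>s=0..n. real s + 1) = (real n + 1) * (real n + 2) / 2"
  by (induction n) (simp_all add: field_simps)

lemma sum_quad1: "(\<Sum>s=0..n. real s * (real s + 1)) = real n * (real n + 1) * (real n + 2) / 3"
  by (induction n) (simp_all add: field_simps)

lemma ff_alt: "ff d s = 2 * d * real s + d^2 * (real s * (real s - 1))"
  by (simp add: ff_def algebra_simps)

lemma fact_plus1: "fact (k+1) = (real k + 1) * (fact k::real)"
  unfolding Suc_eq_plus1[symmetric] fact_Suc by simp

lemma binom_w:
  fixes ff :: real
  assumes "fact s * fact (k - s) * real (k choose s) = (fact k :: real)"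
  shows "real (k choose s) * (fact s * fact (k - s) / fact (k+1) * ff) = ff / (real k + 1)"
proof -
  have "real (k choose s) * (fact s * fact (k - s) / fact (k+1) * ff) = (fact s * fact (k - s) * real (k choose s)) / fact (k+1) * ff"
    by (simp only: mult_ac times_divide_eq_left times_divide_eq_right)
  also have "\<dots> = fact k / ((real k + 1) * fact k) * ff" unfolding assms fact_plus1 ..
  also have "\<dots> = ff / (real k + 1)" by simp
  finally show ?thesis .
qed

lemma hub:
  assumes "1 \<le> k"
  shows "shapley 0 {0..k} (conf_restr (worth d (star_edge k)) {{i, j} | i j. star_edge k i j})
     = real k * d + real k * (real k - 1) / 3 * d ^ 2"
proof -
  let ?g = "conf_restr (worth d (star_edge k)) {{i, j} | i j. star_edge k i j}"
  let ?h = "\<lambda>s. fact s * fact (k - s) / fact (k+1) * ff d s :: real"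
  have V: "{0..k} - {0} = {1..k}" by auto
  have "shapley 0 {0..k} ?g = (\<Sum>S\<in>Pow {1..k}. ?h (card S))"
    unfolding shapley_def V
  proof (rule sum.cong[OF refl])
    fix S assume S: "S \<in> Pow {1..k}"
    then have fin: "finite S" using finite_subset[of S "{1..k}"] by simp
    have "?g (insert 0 S) = ff d (card S)"
    proof -
      have "0 \<notin> S" using S by auto
      then have "card (insert 0 S) - 1 = card S" using fin by simp
      moreover have "?g (insert 0 S) = ff d (card (insert 0 S) - 1)" using S by (intro restr_0) auto
      ultimately show ?thesis by simp
    qed
    moreover have "?g S = 0" using S by (intro restr_no0) auto
    ultimately show "fact (card S) * fact (card {0..k} - card S - 1) / fact (card {0..k}) * (?g (insert 0 S) - ?g S) = ?h (card S)"
      by simp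
  qed
  also have "\<dots> = (\<Sum>s=0..k. real (k choose s) * ?h s)"
    using sum_Pow_card[of "{1..k}" ?h] by simp
  also have "\<dots> = (\<Sum>s=0..k. ff d s / (real k + 1))"
  proof (rule sum.cong[OF refl])
    fix s assume "s \<in> {0..k}"
    then have "fact s * fact (k - s) * (k choose s) = (fact k :: nat)"
      using binomial_fact_lemma[of s k] by simp
    then have "real (fact s * fact (k - s) * (k choose s)) = real (fact k)" by (rule arg_cong)
    then have "fact s * fact (k - s) * real (k choose s) = (fact k::real)"
      by (simp only: of_nat_mult of_nat_fact)
    then show "real (k choose s) * ?h s = ff d s / (real k + 1)"
      by (rule binom_w)
  qed
  also have "\<dots> = (\<Sum>s=0..k. ff d s) / (real k + 1)" by (simp add: sum_divide_distrib)
  also have "\<dots> = (2 * d * (\<Sum>s=0..k. real s) + d^2 * (\<Sum>s=0..k. real s * (real s - 1))) / (real k + 1)"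
    unfolding ff_alt sum.distrib sum_distrib_left ..
  also have "\<dots> = real k * d + real k * (real k - 1) / 3 * d ^ 2"
    unfolding sum_lin sum_quad by (simp add: field_simps)
  finally show ?thesis .
qed


lemma ff_diff: "ff d (Suc t) - ff d t = 2 * d + 2 * real t * d^2"
  by (simp add: ff_def algebra_simps power2_eq_square)

lemma binom_w2:
  fixes c :: real
  assumes "fact t * fact (n - t) * real (n choose t) = (fact n :: real)"
  shows "real (n choose t) * (fact (t+1) * fact (n - t) / fact (n+2) * c) = (real t + 1) * c / ((real n + 1) * (real n + 2))"
proof -
  have f1: "fact (t+1) = (real t + 1) * (fact t :: real)" by (rule fact_plus1)
  have f2: "fact (n+2) = (real n + 2) * ((real n + 1) * (fact n :: real))"
    using fact_plus1[of "n+1"] fact_plus1[of n] by (simp add: add.assoc algebra_simps)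
  have "real (n choose t) * (fact (t+1) * fact (n - t) / fact (n+2) * c)
      = (real t + 1) * (fact t * fact (n - t) * real (n choose t)) / fact (n+2) * c"
    unfolding f1 by (simp only: mult_ac times_divide_eq_left times_divide_eq_right)
  also have "\<dots> = (real t + 1) * fact n / ((real n + 2) * ((real n + 1) * fact n)) * c"
    unfolding assms f2 ..
  also have "\<dots> = (real t + 1) * c / ((real n + 1) * (real n + 2))"
  proof -
    have "(real t + 1) * fact n / ((real n + 2) * ((real n + 1) * fact n)) * c
        = ((real t + 1) * c * fact n) / (((real n + 1) * (real n + 2)) * fact n)"
      by (simp only: mult_ac times_divide_eq_left times_divide_eq_right)
    also have "\<dots> = (real t + 1) * c / ((real n + 1) * (real n + 2))"
      by (rule mult_divide_mult_cancel_right) simp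
    finally show ?thesis .
  qed
  finally show ?thesis .
qed

lemma leaf:
  assumes l: "l \<in> {1..k}"
  shows "shapley l {0..k} (conf_restr (worth d (star_edge k)) {{i, j} | i j. star_edge k i j})
     = d + 2 * (real k - 1) / 3 * d ^ 2"
proof -
  let ?g = "conf_restr (worth d (star_edge k)) {{i, j} | i j. star_edge k i j}"
  obtain n where k: "k = Suc n" using l by (cases k) auto
  let ?A = "{1..k} - {l}"
  have finA: "finite ?A" by simp
  have A0: "0 \<notin> ?A" by simp
  have cA: "card ?A = n" using l k by simp
  have cV: "card {0..k} = n + 2" using k by simp
  have V: "{0..k} - {l} = insert 0 ?A" using l by auto
  define w where "w S = fact (card S) * fact (card {0..k} - card S - 1) / fact (card {0..k}) * (?g (insert l S) - ?g S)" for S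
  let ?h = "\<lambda>t. fact (t+1) * fact (n - t) / fact (n+2) * (2 * d + 2 * real t * d^2) :: real"
  have "shapley l {0..k} ?g = sum w (Pow (insert 0 ?A))"
    unfolding shapley_def V w_def ..
  also have "\<dots> = sum w (Pow ?A) + sum w (insert 0 ` Pow ?A)"
    unfolding Pow_insert by (rule sum.union_disjoint) auto
  also have "sum w (Pow ?A) = 0"
  proof (rule sum.neutral, rule ballI)
    fix S assume S: "S \<in> Pow ?A"
    have "?g (insert l S) = 0" using S l by (intro restr_no0) auto
    moreover have "?g S = 0" using S by (intro restr_no0) auto
    ultimately show "w S = 0" unfolding w_def by simp
  qed
  also have "sum w (insert 0 ` Pow ?A) = sum (w \<circ> insert 0) (Pow ?A)"
  proof (rule sum.reindex)
    show "inj_on (insert 0) (Pow ?A)"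
      unfolding inj_on_def by (metis A0 PowD Diff_insert_absorb subset_iff)
  qed
  also have "\<dots> = (\<Sum>S\<in>Pow ?A. ?h (card S))"
  proof (rule sum.cong[OF refl])
    fix S assume S: "S \<in> Pow ?A"
    have finS: "finite S" using finite_subset[of S ?A] S by simp
    have S0: "0 \<notin> S" and Sl: "l \<notin> S" using S by auto
    have l0: "l \<noteq> 0" using l by simp
    have c1: "card (insert 0 S) = card S + 1" using finS S0 by simp
    have c2: "card (insert l (insert 0 S)) - 1 = Suc (card S)" using finS S0 Sl l0 by simp
    have Sk: "S \<subseteq> {0..k}" using S by auto
    have s1: "insert l (insert 0 S) \<subseteq> {0..k}" using Sk l by auto
    have s2: "insert 0 S \<subseteq> {0..k}" using Sk by auto
    have g1: "?g (insert l (insert 0 S)) = ff d (Suc (card S))"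
      using restr_0[OF s1, of d] c2 by simp
    have g2: "?g (insert 0 S) = ff d (card S)"
      using restr_0[OF s2, of d] c1 by simp
    have e: "n + 2 - (card S + 1) - 1 = n - card S" by simp
    show "(w \<circ> insert 0) S = ?h (card S)"
      unfolding comp_def w_def g1 g2 ff_diff cV c1 e ..
  qed
  also have "\<dots> = (\<Sum>t=0..n. real (n choose t) * ?h t)"
    using sum_Pow_card[OF finA, of ?h] cA by simp
  also have "\<dots> = (\<Sum>t=0..n. (real t + 1) * (2 * d + 2 * real t * d^2) / ((real n + 1) * (real n + 2)))"
  proof (rule sum.cong[OF refl])
    fix t assume "t \<in> {0..n}"
    then have "fact t * fact (n - t) * (n choose t) = (fact n :: nat)"
      using binomial_fact_lemma[of t n] by simp
    then have "real (fact t * fact (n - t) * (n choose t)) = real (fact n)" by (rule arg_cong)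
    then have "fact t * fact (n - t) * real (n choose t) = (fact n::real)"
      by (simp only: of_nat_mult of_nat_fact)
    then show "real (n choose t) * ?h t = (real t + 1) * (2 * d + 2 * real t * d^2) / ((real n + 1) * (real n + 2))"
      by (rule binom_w2)
  qed
  also have "\<dots> = (\<Sum>t=0..n. (real t + 1) * (2 * d + 2 * real t * d^2)) / ((real n + 1) * (real n + 2))"
    by (simp add: sum_divide_distrib)
  also have "(\<lambda>t. (real t + 1) * (2 * d + 2 * real t * d^2)) = (\<lambda>t. 2 * d * (real t + 1) + 2 * d^2 * (real t * (real t + 1)))"
    by (rule ext) (simp add: algebra_simps)
  also have "(\<Sum>t=0..n. 2 * d * (real t + 1) + 2 * d^2 * (real t * (real t + 1)))
     = 2 * d * (\<Sum>t=0..n. real t + 1) + 2 * d^2 * (\<Sum>t=0..n. real t * (real t + 1))"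
    by (simp only: sum.distrib[of "\<lambda>t. 2 * d * (real t + 1)" "\<lambda>t. 2 * d^2 * (real t * (real t + 1))"] sum_distrib_left)
  also have "0 + (2 * d * (\<Sum>t=0..n. real t + 1) + 2 * d^2 * (\<Sum>t=0..n. real t * (real t + 1))) / ((real n + 1) * (real n + 2)) = d + 2 * (real k - 1) / 3 * d ^ 2"
  proof -
    have nz: "(real n + 1) * (real n + 2) \<noteq> 0" by (simp add: add_pos_pos)
    have num: "2 * d * ((real n + 1) * (real n + 2) / 2) + 2 * d^2 * (real n * (real n + 1) * (real n + 2) / 3)
        = (d + 2 * real n / 3 * d^2) * ((real n + 1) * (real n + 2))"
      by (simp add: field_simps)
    have rk: "real k - 1 = real n" using k by simp
    show ?thesis unfolding sum_lin1 sum_quad1 add_0_left num rk using nz by simp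
  qed
  finally show ?thesis .
qed


theorem mainTheorem4:
  fixes d :: real and k :: nat
  assumes "0 < d" and "d < 1" and "1 \<le> k"
  defines "V \<equiv> {0..k}"
      and "H \<equiv> {{i, j} | i j. star_edge k i j}"
  shows "(\<forall>l\<in>{1..k}. shapley l V (conf_restr (worth d (star_edge k)) H)
            = d + 2 * (real k - 1) / 3 * d ^ 2)
       \<and> shapley 0 V (conf_restr (worth d (star_edge k)) H)
            = real k * d + real k * (real k - 1) / 3 * d ^ 2"
  unfolding V_def H_def using leaf hub[OF assms(3)] by blast

end
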